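(* Let $\eta>0$ and $\theta>0$, and let $(\bar q(t))_{t\in\mathbb Z_+}$ be a sequence in $(0,1)$ such that $$\bar q(t+1)-\bar q(t)\le-\frac{\eta\,\bar q(t)^2}{\log\big(e-\log(\theta\bar q(t))\big)}\quad\text{for all }t,$$ and $\theta\bar q(0)\le1$. Then for every $T$ with $\eta T/\theta\ge1$, $$\bar q(T)\le\frac{1}{\eta T}\log\Big(e+\log\Big(\frac{\eta T}{\theta}\Big)\Big).$$ *)

theory Defs
  imports Complex_Main
begin

end

theory Submission
  imports Defs
begin

theorem lemma22:
  fixes \<eta> \<theta> :: real and q :: "nat \<Rightarrow> real" and T :: nat
  assumes "\<eta> > 0" and "\<theta> > 0"
    and "\<And>t. 0 < q t \<and> q t < 1"
    and "\<And>t. q (Suc t) - q t \<le> - (\<eta> * (q t)^2 / ln (exp 1 - ln (\<theta> * q t)))"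
    and "\<theta> * q 0 \<le> 1"
    and "\<eta> * real T / \<theta> \<ge> 1"
  shows "q T \<le> (1 / (\<eta> * real T)) * ln (exp 1 + ln (\<eta> * real T / \<theta>))"
proof -
  note eta = assms(1) and th = assms(2) and qpos = assms(3) and rec = assms(4)
  define L where "L t = ln (exp 1 - ln (\<theta> * q t))" for t
  have Lge: "L t \<ge> 1" if "\<theta> * q t \<le> 1" for t
  proof -
    have "\<theta> * q t > 0" using th qpos[of t] by simp
    hence "ln (\<theta> * q t) \<le> 0" using that by simp
    hence "exp 1 - ln (\<theta> * q t) \<ge> exp 1" by simp
    hence "ln (exp 1 - ln (\<theta> * q t)) \<ge> ln (exp 1)"
      using exp_gt_zero[of 1] by (intro ln_mono) auto
    thus ?thesis unfolding L_def by simp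
  qed
  have stepdec: "q (Suc t) \<le> q t" if "\<theta> * q t \<le> 1" for t
  proof -
    have "L t > 0" using Lge[OF that] by simp
    hence "\<eta> * (q t)^2 / L t \<ge> 0" using eta by simp
    thus ?thesis using rec[of t] unfolding L_def by simp
  qed
  have bnd: "\<theta> * q t \<le> 1" for t
  proof (induction t)
    case 0 then show ?case using assms(5) by simp
  next
    case (Suc t)
    have "q (Suc t) \<le> q t" using stepdec[OF Suc] .
    hence "\<theta> * q (Suc t) \<le> \<theta> * q t" using th by simp
    thus ?case using Suc by simp
  qed
  have L1: "L t \<ge> 1" for t using Lge[OF bnd] .
  have dec: "q (Suc t) \<le> q t" for t using stepdec[OF bnd] .
  have Lmono: "L t \<le> L (Suc t)" for t
  proof -
    have "\<theta> * q (Suc t) \<le> \<theta> * q t" using dec[of t] th by simp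
    moreover have "\<theta> * q (Suc t) > 0" using th qpos[of "Suc t"] by simp
    ultimately have "ln (\<theta> * q (Suc t)) \<le> ln (\<theta> * q t)" by simp
    hence "exp 1 - ln (\<theta> * q t) \<le> exp 1 - ln (\<theta> * q (Suc t))" by simp
    moreover have "exp 1 - ln (\<theta> * q t) > 0"
      using bnd[of t] th qpos[of t] by (smt (verit) exp_gt_zero ln_le_zero_iff mult_pos_pos)
    ultimately show ?thesis unfolding L_def by simp
  qed
  have key: "1 / q (Suc t) \<ge> 1 / q t + \<eta> / L t" for t
  proof -
    let ?a = "q t" and ?b = "q (Suc t)"
    have a: "?a > 0" and b: "?b > 0" using qpos by auto
    have Lp: "L t > 0" using L1[of t] by simp
    have "?a - ?b \<ge> \<eta> * ?a^2 / L t" using rec[of t] unfolding L_def by simp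
    moreover have "\<eta> * ?a^2 / L t \<ge> \<eta> * (?a * ?b) / L t"
      using dec[of t] a eta Lp by (intro divide_right_mono mult_left_mono) (auto simp: power2_eq_square)
    ultimately have "?a - ?b \<ge> \<eta> * (?a * ?b) / L t" by simp
    hence "(?a - ?b) / (?a * ?b) \<ge> \<eta> / L t"
      using a b by (simp add: field_simps)
    moreover have "(?a - ?b) / (?a * ?b) = 1 / ?b - 1 / ?a" using a b by (simp add: field_simps)
    ultimately show ?thesis by simp
  qed
  have ind: "1 / q n \<ge> \<eta> * real n / L n" for n
  proof (induction n)
    case 0 then show ?case using qpos[of 0] by simp
  next
    case (Suc n)
    have Lp: "L n > 0" "L (Suc n) > 0" using L1[of n] L1[of "Suc n"] by auto
    have "\<eta> * real n / L (Suc n) \<le> \<eta> * real n / L n"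
      using Lmono[of n] Lp eta by (intro divide_left_mono) auto
    moreover have "\<eta> / L (Suc n) \<le> \<eta> / L n"
      using Lmono[of n] Lp eta by (intro divide_left_mono) auto
    moreover have "\<eta> * real (Suc n) / L (Suc n) = \<eta> * real n / L (Suc n) + \<eta> / L (Suc n)"
      by (simp add: add_divide_distrib algebra_simps)
    ultimately show ?case using key[of n] Suc by linarith
  qed
  have Tpos: "real T > 0"
  proof (rule ccontr)
    assume "\<not> real T > 0" hence "T = 0" by simp
    thus False using assms(6) by simp
  qed
  have ETp: "\<eta> * real T > 0" using eta Tpos by simp
  have LTp: "L T > 0" using L1[of T] by simp
  have qT: "q T \<le> L T / (\<eta> * real T)"
  proof -
    have "1 / q T \<ge> \<eta> * real T / L T" using ind .
    thus ?thesis using qpos[of T] ETp LTp by (simp add: field_simps)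
  qed
  have lnge: "ln (exp 1 + ln (\<eta> * real T / \<theta>)) \<ge> 1"
  proof -
    have "ln (\<eta> * real T / \<theta>) \<ge> 0" using assms(6) by simp
    hence "exp 1 + ln (\<eta> * real T / \<theta>) \<ge> exp 1" by simp
    hence "ln (exp 1 + ln (\<eta> * real T / \<theta>)) \<ge> ln (exp 1)"
      using exp_gt_zero[of 1] by (intro ln_mono) auto
    thus ?thesis by simp
  qed
  show ?thesis
  proof (cases "q T \<le> 1 / (\<eta> * real T)")
    case True
    have "1 / (\<eta> * real T) \<le> (1 / (\<eta> * real T)) * ln (exp 1 + ln (\<eta> * real T / \<theta>))"
      using lnge ETp by (simp add: divide_right_mono)
    then show ?thesis using True by linarith
  next
    case False
    hence "q T > 1 / (\<eta> * real T)" by simp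
    hence "\<theta> * q T > \<theta> * (1 / (\<eta> * real T))" using th by (rule mult_strict_left_mono)
    hence gt: "\<theta> * q T > \<theta> / (\<eta> * real T)" by simp
    have pos: "\<theta> / (\<eta> * real T) > 0" using th ETp by simp
    have "ln (\<theta> / (\<eta> * real T)) < ln (\<theta> * q T)" using gt pos by simp
    moreover have "ln (\<theta> / (\<eta> * real T)) = - ln (\<eta> * real T / \<theta>)"
      using th ETp by (simp add: ln_div)
    ultimately have "exp 1 - ln (\<theta> * q T) < exp 1 + ln (\<eta> * real T / \<theta>)" by simp
    moreover have "exp 1 - ln (\<theta> * q T) > 0"
      using bnd[of T] th qpos[of T] by (smt (verit) exp_gt_zero ln_le_zero_iff mult_pos_pos)
    ultimately have "L T < ln (exp 1 + ln (\<eta> * real T / \<theta>))" unfolding L_def by simp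
    hence "L T / (\<eta> * real T) \<le> ln (exp 1 + ln (\<eta> * real T / \<theta>)) / (\<eta> * real T)"
      using ETp by (simp add: divide_right_mono)
    then show ?thesis using qT by simp
  qed
qed

end
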